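(* Let $r\ge1$ and let $\tau$ be a permutation of $F^r$ with $\tau(\mathbf 0)=\mathbf 0$. The Steiner quadruple system $SQS_\tau$ is point transitive if and only if $\tau^{-1}\in\mathrm{GL}(r,2)\,\tau\,\mathrm{GL}(r,2)$, i.e. there are $A,B\in\mathrm{GL}(r,2)$ with $\tau^{-1}(x)=A\tau(Bx)$ for all $x\in F^r$.
   Context: $F=\mathrm{GF}(2)$, $\mathbf 0$ is the all-zero vector. The point set consists of the $2^{r+1}$ symbols $(\{a\},\emptyset)$ and $(\emptyset,\{a\})$, $a\in F^r$; a pair $(X,Y)$ with $X,Y\subseteq F^r$ denotes the set of points $\{(\{x\},\emptyset):x\in X\}\cup\{(\emptyset,\{y\}):y\in Y\}$. $SQS_\tau=Q_0\cup Q_1\cup Q_\tau$ where $Q_0=\{(\{a,b,c,d\},\emptyset): a,b,c,d\in F^r \text{ pairwise distinct}, a+b+c+d=\mathbf 0\}$, $Q_1=\{(\emptyset,\{a,b,c,d\}): a,b,c,d\in F^r \text{ pairwise distinct}, a+b+c+d=\mathbf 0\}$, $Q_\tau=\{(\{a,c\},\{b,d\}): a,b,c,d\in F^r, \tau(a+c)=b+d\neq\mathbf 0\}$. A Steiner quadruple system is point transitive if its automorphism group (permutations of points preserving the set of quadruples) acts transitively on its points. *)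

theory Defs
  imports "HOL-Analysis.Analysis" "HOL-Library.Z2"
begin

text \<open>F = GF(2) is the field type bit; F^r is bit ^ 'n with CARD('n) = r.
  Points: Inl a stands for ({a},{}), Inr a stands for ({},{a}).\<close>

type_synonym 'n pt = "(bit ^ 'n) + (bit ^ 'n)"

definition Q0 :: "'n::finite pt set set" where
  "Q0 = {{Inl a, Inl b, Inl c, Inl d} | a b c d.
          distinct [a, b, c, d] \<and> a + b + c + d = 0}"

definition Q1 :: "'n::finite pt set set" where
  "Q1 = {{Inr a, Inr b, Inr c, Inr d} | a b c d.
          distinct [a, b, c, d] \<and> a + b + c + d = 0}"

definition Qtau :: "(bit ^ 'n \<Rightarrow> bit ^ 'n) \<Rightarrow> 'n::finite pt set set" where
  "Qtau \<tau> = {{Inl a, Inl c, Inr b, Inr d} | a b c d.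
          \<tau> (a + c) = b + d \<and> b + d \<noteq> 0}"

definition SQS :: "(bit ^ 'n \<Rightarrow> bit ^ 'n) \<Rightarrow> 'n::finite pt set set" where
  "SQS \<tau> = Q0 \<union> Q1 \<union> Qtau \<tau>"

definition automorphism :: "('p \<Rightarrow> 'p) \<Rightarrow> 'p set set \<Rightarrow> bool" where
  "automorphism \<sigma> S \<longleftrightarrow> bij \<sigma> \<and> (\<lambda>Q. \<sigma> ` Q) ` S = S"

definition point_transitive :: "'p set set \<Rightarrow> bool" where
  "point_transitive S \<longleftrightarrow> (\<forall>p q. \<exists>\<sigma>. automorphism \<sigma> S \<and> \<sigma> p = q)"

end

theory Submission imports Defs begin
instance bit :: finite
proof
  have "(UNIV :: bit set) = {0, 1}" by (auto intro: bit.exhaust)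
  then show "finite (UNIV :: bit set)" by (metis finite.emptyI finite.insertI)
qed

lemma bit_add_self[simp]: "(x::bit) + x = 0"
  by (cases x) simp_all
lemma vadd_self[simp]: "(x::bit^'n) + x = 0"
  by (simp add: vec_eq_iff)
lemma vadd_self2[simp]: "(x::bit^'n) + (x + y) = y"
  by (simp add: add.assoc[symmetric])
lemma vneg[simp]: "- (x::bit^'n) = x"
  by (metis add.inverse_unique vadd_self)
lemma vsum_zero_iff: "(x::bit^'n) + y = 0 \<longleftrightarrow> x = y"
  by (metis vadd_self vadd_self2 add.commute add_0_right)

definition addh :: "('a::ab_group_add \<Rightarrow> 'b::ab_group_add) \<Rightarrow> bool" where
  "addh h \<longleftrightarrow> (\<forall>x y. h (x+y) = h x + h y)"

lemma addh_zero: "addh h \<Longrightarrow> h 0 = 0"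
  unfolding addh_def by (metis add_0 add_cancel_right_left)

lemma addh_linear:
  fixes h :: "bit^'n \<Rightarrow> bit^'m"
  assumes "addh h" shows "Vector_Spaces.linear (*s) (*s) h"
proof unfold_locales
  fix x y show "h (x + y) = h x + h y" using assms by (simp add: addh_def)
next
  fix c :: bit and x show "h (c *s x) = c *s h x"
    using addh_zero[OF assms] by (cases c) simp_all
qed

lemma addh_bij_matrix:
  fixes h :: "bit^'n \<Rightarrow> bit^'n"
  assumes ad: "addh h" and bj: "bij h"
  shows "\<exists>M. invertible M \<and> (\<forall>x. h x = M *v x)"
proof -
  have sf: "h (inv h x) = x" for x using bj by (simp add: bij_is_surj surj_f_inv_f)
  have fs: "inv h (h x) = x" for x using bj by (simp add: bij_is_inj)
  have ai: "addh (inv h)" unfolding addh_def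
  proof (intro allI)
    fix x y
    have "h (inv h x + inv h y) = x + y" using ad sf by (simp add: addh_def)
    then show "inv h (x + y) = inv h x + inv h y" by (metis fs)
  qed
  define M where "M = matrix h"
  define M' where "M' = matrix (inv h)"
  have hM: "h x = M *v x" for x unfolding M_def by (simp add: matrix_works addh_linear[OF ad])
  have hM': "inv h x = M' *v x" for x unfolding M'_def by (simp add: matrix_works addh_linear[OF ai])
  have "M ** M' = mat 1"
    by (simp add: matrix_eq matrix_vector_mul_assoc[symmetric] hM[symmetric] hM'[symmetric] sf)
  moreover have "M' ** M = mat 1"
    by (simp add: matrix_eq matrix_vector_mul_assoc[symmetric] hM[symmetric] hM'[symmetric] fs)
  ultimately have "invertible M" unfolding invertible_def by blast
  then show ?thesis using hM by blast
qed

lemma auto_mem: "automorphism \<sigma> S \<Longrightarrow> (\<sigma> ` X \<in> S \<longleftrightarrow> X \<in> S)"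
proof -
  assume "automorphism \<sigma> S"
  then have bj: "inj \<sigma>" and im: "(\<lambda>Q. \<sigma> ` Q) ` S = S" by (auto simp: automorphism_def bij_is_inj)
  show ?thesis
  proof
    assume "\<sigma> ` X \<in> S"
    then have "\<sigma> ` X \<in> (\<lambda>Q. \<sigma> ` Q) ` S" using im by simp
    then obtain Y where "Y \<in> S" "\<sigma> ` X = \<sigma> ` Y" by blast
    then show "X \<in> S" using bj by (simp add: inj_image_eq_iff)
  next
    assume "X \<in> S"
    then have "\<sigma> ` X \<in> (\<lambda>Q. \<sigma> ` Q) ` S" by blast
    then show "\<sigma> ` X \<in> S" using im by simp
  qed
qed

lemma auto_inv: "automorphism \<sigma> S \<Longrightarrow> automorphism (inv \<sigma>) S"
proof -
  assume a: "automorphism \<sigma> S"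
  then have bj: "bij \<sigma>" and im: "(\<lambda>Q. \<sigma> ` Q) ` S = S" by (auto simp: automorphism_def)
  have "(\<lambda>Q. inv \<sigma> ` Q) ` S = (\<lambda>Q. inv \<sigma> ` Q) ` ((\<lambda>Q. \<sigma> ` Q) ` S)" using im by simp
  also have "\<dots> = S" using bj by (simp add: image_comp bij_is_inj image_inv_f_f)
  finally show ?thesis using bj by (simp add: automorphism_def bij_imp_bij_inv)
qed

lemma auto_comp: "automorphism \<sigma> S \<Longrightarrow> automorphism \<rho> S \<Longrightarrow> automorphism (\<sigma> \<circ> \<rho>) S"
proof -
  assume a: "automorphism \<sigma> S" "automorphism \<rho> S"
  have "(\<lambda>Q. (\<sigma> \<circ> \<rho>) ` Q) ` S = (\<lambda>Q. \<sigma> ` Q) ` ((\<lambda>Q. \<rho> ` Q) ` S)" by (simp only: image_image image_comp comp_def)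
  then show ?thesis using a unfolding automorphism_def by (simp add: bij_comp)
qed

lemma finite_pts: "finite (S :: 'n::finite pt set set)"
  by simp

lemma auto_from_sub:
  fixes S :: "'n::finite pt set set"
  assumes "bij \<sigma>" "\<And>Q. Q \<in> S \<Longrightarrow> \<sigma> ` Q \<in> S"
  shows "automorphism \<sigma> S"
proof -
  have sub: "(\<lambda>Q. \<sigma> ` Q) ` S \<subseteq> S" using assms by auto
  have "inj_on (\<lambda>Q. \<sigma> ` Q) S" using assms(1) by (meson bij_is_inj inj_image_eq_iff inj_onI)
  then have "card ((\<lambda>Q. \<sigma> ` Q) ` S) = card S" by (simp add: card_image)
  then have "(\<lambda>Q. \<sigma> ` Q) ` S = S" using sub by (simp add: card_subset_eq)
  then show ?thesis using assms(1) by (simp add: automorphism_def)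
qed

lemma Q0_vim: "X \<in> Q0 \<Longrightarrow> Inr -` X = {}" unfolding Q0_def by blast
lemma Q1_vim: "X \<in> Q1 \<Longrightarrow> Inl -` X = {}" unfolding Q1_def by blast
lemma Qt_vim: "X \<in> Qtau \<tau> \<Longrightarrow> Inl -` X \<noteq> {} \<and> Inr -` X \<noteq> {}" unfolding Qtau_def by blast

lemma doub_sum: "{a, c} = {a', c'} \<Longrightarrow> (a::'a::ab_semigroup_add) + c = a' + c'"
  by (auto simp: doubleton_eq_iff add.commute)

lemma mixed_eq: "{Inl a, Inl c, Inr b, Inr d} = {Inl a', Inl c', Inr b', Inr d'} \<Longrightarrow> {a, c} = {a', c'} \<and> {b, d} = {b', d'}"
proof -
  assume e: "{Inl a, Inl c, Inr b, Inr d} = {Inl a', Inl c', Inr b', Inr d'}"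
  have "Inl -` {Inl a, Inl c, Inr b, Inr d} = {a, c}" "Inl -` {Inl a', Inl c', Inr b', Inr d'} = {a', c'}"
       "Inr -` {Inl a, Inl c, Inr b, Inr d} = {b, d}" "Inr -` {Inl a', Inl c', Inr b', Inr d'} = {b', d'}"
    by auto
  then show ?thesis using e by metis
qed

lemma dist4_sum: "distinct [a, b, c, d] \<Longrightarrow> (a::'a::comm_monoid_add) + b + c + d = sum id {a, b, c, d}"
  by (simp add: add.assoc)

lemma eq4: "{a, b, c, d} = {a', b', c', d'} \<Longrightarrow> distinct [a', b', c', d'] \<Longrightarrow> distinct [a, b, c, d]"
proof -
  assume e: "{a, b, c, d} = {a', b', c', d'}" and d: "distinct [a', b', c', d']"
  have "card (set [a', b', c', d']) = 4" using d by (simp only: distinct_card) simp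
  then have "card (set [a, b, c, d]) = length [a, b, c, d]" using e by simp
  then show ?thesis by (rule card_distinct)
qed

lemma Inl4_iff:
  fixes a b c d :: "bit ^ 'n::finite"
  shows "{Inl a, Inl b, Inl c, Inl d} \<in> SQS \<tau> \<longleftrightarrow> distinct [a, b, c, d] \<and> a + b + c + d = 0"
proof
  assume "distinct [a, b, c, d] \<and> a + b + c + d = 0"
  then show "{Inl a, Inl b, Inl c, Inl d} \<in> SQS \<tau>" unfolding SQS_def Q0_def by blast
next
  define X :: "'n pt set" where "X = {Inl a, Inl b, Inl c, Inl d}"
  assume "{Inl a, Inl b, Inl c, Inl d} \<in> SQS \<tau>"
  then have m: "X \<in> SQS \<tau>" unfolding X_def .
  have v: "Inl -` X = {a, b, c, d}" unfolding X_def by auto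
  have "X \<notin> Q1" using Q1_vim v by blast
  moreover have "X \<notin> Qtau \<tau>" using Qt_vim unfolding X_def by blast
  ultimately have "X \<in> Q0" using m by (simp add: SQS_def)
  then obtain a' b' c' d' where e: "X = {Inl a', Inl b', Inl c', Inl d'}"
    and d: "distinct [a', b', c', d']" and s: "a' + b' + c' + d' = 0" unfolding Q0_def by blast
  have "Inl -` X = {a', b', c', d'}" unfolding e by auto
  then have e2: "{a, b, c, d} = {a', b', c', d'}" using v by simp
  then have d2: "distinct [a, b, c, d]" using d by (rule eq4)
  have "a + b + c + d = sum id {a, b, c, d}" by (rule dist4_sum[OF d2])
  also have "\<dots> = sum id {a', b', c', d'}" using e2 by (rule arg_cong)
  also have "\<dots> = a' + b' + c' + d'" by (rule dist4_sum[OF d, symmetric])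
  finally show "distinct [a, b, c, d] \<and> a + b + c + d = 0" using d2 s by simp
qed

lemma Inr4_iff:
  fixes a b c d :: "bit ^ 'n::finite"
  shows "{Inr a, Inr b, Inr c, Inr d} \<in> SQS \<tau> \<longleftrightarrow> distinct [a, b, c, d] \<and> a + b + c + d = 0"
proof
  assume "distinct [a, b, c, d] \<and> a + b + c + d = 0"
  then show "{Inr a, Inr b, Inr c, Inr d} \<in> SQS \<tau>" unfolding SQS_def Q1_def by blast
next
  define X :: "'n pt set" where "X = {Inr a, Inr b, Inr c, Inr d}"
  assume "{Inr a, Inr b, Inr c, Inr d} \<in> SQS \<tau>"
  then have m: "X \<in> SQS \<tau>" unfolding X_def .
  have v: "Inr -` X = {a, b, c, d}" unfolding X_def by auto
  have "X \<notin> Q0" using Q0_vim v by blast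
  moreover have "X \<notin> Qtau \<tau>" using Qt_vim unfolding X_def by blast
  ultimately have "X \<in> Q1" using m by (simp add: SQS_def)
  then obtain a' b' c' d' where e: "X = {Inr a', Inr b', Inr c', Inr d'}"
    and d: "distinct [a', b', c', d']" and s: "a' + b' + c' + d' = 0" unfolding Q1_def by blast
  have "Inr -` X = {a', b', c', d'}" unfolding e by auto
  then have e2: "{a, b, c, d} = {a', b', c', d'}" using v by simp
  then have d2: "distinct [a, b, c, d]" using d by (rule eq4)
  have "a + b + c + d = sum id {a, b, c, d}" by (rule dist4_sum[OF d2])
  also have "\<dots> = sum id {a', b', c', d'}" using e2 by (rule arg_cong)
  also have "\<dots> = a' + b' + c' + d'" by (rule dist4_sum[OF d, symmetric])
  finally show "distinct [a, b, c, d] \<and> a + b + c + d = 0" using d2 s by simp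
qed

lemma mixed_iff:
  fixes a b c d :: "bit ^ 'n::finite"
  shows "{Inl a, Inl c, Inr b, Inr d} \<in> SQS \<tau> \<longleftrightarrow> \<tau> (a + c) = b + d \<and> b + d \<noteq> 0"
proof
  assume "\<tau> (a + c) = b + d \<and> b + d \<noteq> 0"
  then show "{Inl a, Inl c, Inr b, Inr d} \<in> SQS \<tau>" unfolding SQS_def Qtau_def by blast
next
  define X :: "'n pt set" where "X = {Inl a, Inl c, Inr b, Inr d}"
  assume "{Inl a, Inl c, Inr b, Inr d} \<in> SQS \<tau>"
  then have m: "X \<in> SQS \<tau>" unfolding X_def .
  have v: "Inl -` X = {a, c}" "Inr -` X = {b, d}" unfolding X_def by auto
  have "X \<notin> Q0" using Q0_vim v by blast
  moreover have "X \<notin> Q1" using Q1_vim v by blast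
  ultimately have "X \<in> Qtau \<tau>" using m by (simp add: SQS_def)
  then obtain a' b' c' d' where e: "X = {Inl a', Inl c', Inr b', Inr d'}"
    and s: "\<tau> (a' + c') = b' + d'" "b' + d' \<noteq> 0" unfolding Qtau_def by blast
  have "Inl -` X = {a', c'}" "Inr -` X = {b', d'}" unfolding e by auto
  then have "{a, c} = {a', c'}" "{b, d} = {b', d'}" using v by simp_all
  then have "a + c = a' + c'" "b + d = b' + d'" by (auto intro: doub_sum)
  then show "\<tau> (a + c) = b + d \<and> b + d \<noteq> 0" using s by simp
qed

lemma card_not1:
  assumes "\<tau> 0 = 0" "X \<in> SQS \<tau>"
  shows "card (Inr -` X) \<noteq> 1 \<and> card (Inl -` X) \<noteq> 1"
  using assms(2) unfolding SQS_def
proof (elim UnE)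
  assume "X \<in> Q0"
  then obtain a b c d where X: "X = {Inl a, Inl b, Inl c, Inl d}" "distinct [a,b,c,d]" unfolding Q0_def by blast
  have "Inl -` X = {a, b, c, d}" "Inr -` X = {}" using X(1) by auto
  then show ?thesis using X(2) by simp
next
  assume "X \<in> Q1"
  then obtain a b c d where X: "X = {Inr a, Inr b, Inr c, Inr d}" "distinct [a,b,c,d]" unfolding Q1_def by blast
  have "Inr -` X = {a, b, c, d}" "Inl -` X = {}" using X(1) by auto
  then show ?thesis using X(2) by simp
next
  assume "X \<in> Qtau \<tau>"
  then obtain a b c d where X: "X = {Inl a, Inl c, Inr b, Inr d}" "\<tau> (a + c) = b + d" "b + d \<noteq> 0" unfolding Qtau_def by blast
  then have "b \<noteq> d" by auto
  moreover have "a \<noteq> c" using X assms(1) by auto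
  moreover have "Inl -` X = {a, c}" "Inr -` X = {b, d}" using X(1) by auto
  ultimately show ?thesis by simp
qed


lemma SQS_cases:
  assumes "Q \<in> SQS \<tau>"
  shows "(\<exists>a b c d. Q = {Inl a, Inl b, Inl c, Inl d} \<and> distinct [a, b, c, d] \<and> a + b + c + d = 0) \<or>
         (\<exists>a b c d. Q = {Inr a, Inr b, Inr c, Inr d} \<and> distinct [a, b, c, d] \<and> a + b + c + d = 0) \<or>
         (\<exists>a c b d. Q = {Inl a, Inl c, Inr b, Inr d} \<and> \<tau> (a + c) = b + d \<and> b + d \<noteq> 0)"
  using assms unfolding SQS_def Q0_def Q1_def Qtau_def by blast

definition aff :: "'p set set \<Rightarrow> 'p \<Rightarrow> 'p \<Rightarrow> bool" where
  "aff S p q \<longleftrightarrow> (\<forall>s t s' t'. distinct [p, q, s, t, s', t'] \<and> {p, q, s, t} \<in> S \<and> {p, q, s', t'} \<in> S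
      \<longrightarrow> {s, t, s', t'} \<in> S)"

lemma aff_img:
  assumes au: "automorphism \<sigma> S" and af: "aff S p q"
  shows "aff S (\<sigma> p) (\<sigma> q)"
  unfolding aff_def
proof (intro allI impI)
  fix s t s' t'
  assume h: "distinct [\<sigma> p, \<sigma> q, s, t, s', t'] \<and> {\<sigma> p, \<sigma> q, s, t} \<in> S \<and> {\<sigma> p, \<sigma> q, s', t'} \<in> S"
  have bj: "bij \<sigma>" using au by (simp add: automorphism_def)
  have sf: "\<sigma> (inv \<sigma> z) = z" for z using bj by (simp add: bij_is_surj surj_f_inv_f)
  define s0 where "s0 = inv \<sigma> s"
  define t0 where "t0 = inv \<sigma> t"
  define s1 where "s1 = inv \<sigma> s'"
  define t1 where "t1 = inv \<sigma> t'"
  have e: "s = \<sigma> s0" "t = \<sigma> t0" "s' = \<sigma> s1" "t' = \<sigma> t1"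
    unfolding s0_def t0_def s1_def t1_def by (simp_all add: sf)
  have "distinct (map \<sigma> [p, q, s0, t0, s1, t1])" using h e by simp
  then have d: "distinct [p, q, s0, t0, s1, t1]" by (simp only: distinct_map)
  have "\<sigma> ` {p, q, s0, t0} \<in> S" using h e by simp
  then have b1: "{p, q, s0, t0} \<in> S" using auto_mem[OF au] by blast
  have "\<sigma> ` {p, q, s1, t1} \<in> S" using h e by simp
  then have b2: "{p, q, s1, t1} \<in> S" using auto_mem[OF au] by blast
  have "{s0, t0, s1, t1} \<in> S" using af d b1 b2 unfolding aff_def by blast
  then have "\<sigma> ` {s0, t0, s1, t1} \<in> S" using auto_mem[OF au] by blast
  then show "{s, t, s', t'} \<in> S" using e by simp
qed

lemma aff_iff:
  assumes au: "automorphism \<sigma> S"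
  shows "aff S (\<sigma> p) (\<sigma> q) \<longleftrightarrow> aff S p q"
proof
  assume "aff S (\<sigma> p) (\<sigma> q)"
  then have "aff S (inv \<sigma> (\<sigma> p)) (inv \<sigma> (\<sigma> q))" using aff_img[OF auto_inv[OF au]] by blast
  moreover have "inj \<sigma>" using au by (simp add: automorphism_def bij_is_inj)
  ultimately show "aff S p q" by simp
next
  assume "aff S p q"
  then show "aff S (\<sigma> p) (\<sigma> q)" using aff_img[OF au] by blast
qed

lemma compl_Inl:
  assumes t0: "\<tau> 0 = 0" and d: "distinct [Inl a, Inl c, s, t]" and m: "{Inl a, Inl c, s, t} \<in> SQS \<tau>"
  shows "(\<exists>e e2. s = Inl e \<and> t = Inl e2 \<and> e + e2 = a + c) \<or> (\<exists>b d. s = Inr b \<and> t = Inr d \<and> \<tau> (a + c) = b + d)"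
proof (cases s)
  case (Inl e)
  show ?thesis
  proof (cases t)
    case (Inl e2)
    have "{Inl a, Inl c, Inl e, Inl e2} \<in> SQS \<tau>" using m \<open>s = Inl e\<close> Inl by simp
    then have "a + c + e + e2 = 0" using Inl4_iff[THEN iffD1] by blast
    then have "(a + c) + (e + e2) = 0" by (simp add: add.assoc)
    then have "e + e2 = a + c" by (simp add: vsum_zero_iff)
    then show ?thesis using \<open>s = Inl e\<close> Inl by blast
  next
    case (Inr b)
    have v: "Inr -` {Inl a, Inl c, s, t} = {b}" using \<open>s = Inl e\<close> Inr by auto
    have "card (Inr -` {Inl a, Inl c, s, t}) \<noteq> 1" using card_not1[OF t0 m] by blast
    with v show ?thesis by simp
  qed
next
  case (Inr b)
  show ?thesis
  proof (cases t)
    case (Inl e2)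
    have v: "Inr -` {Inl a, Inl c, s, t} = {b}" using \<open>s = Inr b\<close> Inl by auto
    have "card (Inr -` {Inl a, Inl c, s, t}) \<noteq> 1" using card_not1[OF t0 m] by blast
    with v show ?thesis by simp
  next
    case (Inr d)
    have "{Inl a, Inl c, Inr b, Inr d} \<in> SQS \<tau>" using m \<open>s = Inr b\<close> Inr by simp
    then have "\<tau> (a + c) = b + d" using mixed_iff[THEN iffD1] by blast
    then show ?thesis using \<open>s = Inr b\<close> Inr by blast
  qed
qed

lemma compl_Inr:
  assumes t0: "\<tau> 0 = 0" and d: "distinct [Inr a, Inr c, s, t]" and m: "{Inr a, Inr c, s, t} \<in> SQS \<tau>"
  shows "(\<exists>b d. s = Inr b \<and> t = Inr d \<and> b + d = a + c) \<or> (\<exists>e e2. s = Inl e \<and> t = Inl e2 \<and> \<tau> (e + e2) = a + c)"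
proof (cases s)
  case (Inr e)
  show ?thesis
  proof (cases t)
    case (Inr e2)
    have "{Inr a, Inr c, Inr e, Inr e2} \<in> SQS \<tau>" using m \<open>s = Inr e\<close> Inr by simp
    then have "a + c + e + e2 = 0" using Inr4_iff[THEN iffD1] by blast
    then have "(a + c) + (e + e2) = 0" by (simp add: add.assoc)
    then have "e + e2 = a + c" by (simp add: vsum_zero_iff)
    then show ?thesis using \<open>s = Inr e\<close> Inr by blast
  next
    case (Inl b)
    have v: "Inl -` {Inr a, Inr c, s, t} = {b}" using \<open>s = Inr e\<close> Inl by auto
    have "card (Inl -` {Inr a, Inr c, s, t}) \<noteq> 1" using card_not1[OF t0 m] by blast
    with v show ?thesis by simp
  qed
next
  case (Inl b)
  show ?thesis
  proof (cases t)
    case (Inr e2)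
    have v: "Inl -` {Inr a, Inr c, s, t} = {b}" using \<open>s = Inl b\<close> Inr by auto
    have "card (Inl -` {Inr a, Inr c, s, t}) \<noteq> 1" using card_not1[OF t0 m] by blast
    with v show ?thesis by simp
  next
    case (Inl d)
    have "{Inr a, Inr c, s, t} = {Inl b, Inl d, Inr a, Inr c}" using \<open>s = Inl b\<close> Inl by auto
    then have "{Inl b, Inl d, Inr a, Inr c} \<in> SQS \<tau>" using m by simp
    then have "\<tau> (b + d) = a + c" using mixed_iff[THEN iffD1] by blast
    then show ?thesis using \<open>s = Inl b\<close> Inl by blast
  qed
qed

lemma aff_Inl:
  assumes t0: "\<tau> 0 = 0"
  shows "aff (SQS \<tau>) (Inl a) (Inl c)"
  unfolding aff_def
proof (intro allI impI)
  fix s t s' t'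
  assume h: "distinct [Inl a, Inl c, s, t, s', t'] \<and> {Inl a, Inl c, s, t} \<in> SQS \<tau> \<and> {Inl a, Inl c, s', t'} \<in> SQS \<tau>"
  have d1: "distinct [Inl a, Inl c, s, t]" and d2: "distinct [Inl a, Inl c, s', t']" using h by auto
  have m1: "{Inl a, Inl c, s, t} \<in> SQS \<tau>" and m2: "{Inl a, Inl c, s', t'} \<in> SQS \<tau>" using h by simp_all
  from compl_Inl[OF t0 d1 m1] compl_Inl[OF t0 d2 m2]
  show "{s, t, s', t'} \<in> SQS \<tau>"
  proof (elim disjE exE conjE)
    fix e e2 e' e2'
    assume a: "s = Inl e" "t = Inl e2" "e + e2 = a + c" "s' = Inl e'" "t' = Inl e2'" "e' + e2' = a + c"
    have "e + e2 + e' + e2' = (e + e2) + (e' + e2')" by (simp add: add.assoc)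
    also have "\<dots> = 0" using a by simp
    moreover have "distinct [e, e2, e', e2']" using h a by auto
    ultimately show ?thesis using a Inl4_iff[of e e2 e' e2' \<tau>] by simp
  next
    fix e e2 b' d'
    assume a: "s = Inl e" "t = Inl e2" "e + e2 = a + c" "s' = Inr b'" "t' = Inr d'" "\<tau> (a + c) = b' + d'"
    have "b' \<noteq> d'" using h a by auto
    then have "b' + d' \<noteq> 0" by (simp add: vsum_zero_iff)
    then show ?thesis using mixed_iff[of e e2 b' d' \<tau>] a by simp
  next
    fix b d e' e2'
    assume a: "s = Inr b" "t = Inr d" "\<tau> (a + c) = b + d" "s' = Inl e'" "t' = Inl e2'" "e' + e2' = a + c"
    have "b \<noteq> d" using h a by auto
    then have "b + d \<noteq> 0" by (simp add: vsum_zero_iff)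
    then have "{Inl e', Inl e2', Inr b, Inr d} \<in> SQS \<tau>" using mixed_iff[of e' e2' b d \<tau>] a by simp
    moreover have "{s, t, s', t'} = {Inl e', Inl e2', Inr b, Inr d}" using a by auto
    ultimately show ?thesis by simp
  next
    fix b d b' d'
    assume a: "s = Inr b" "t = Inr d" "\<tau> (a + c) = b + d" "s' = Inr b'" "t' = Inr d'" "\<tau> (a + c) = b' + d'"
    have "b + d + b' + d' = (b + d) + (b' + d')" by (simp add: add.assoc)
    also have "\<dots> = 0" using a by (metis vadd_self)
    moreover have "distinct [b, d, b', d']" using h a by auto
    ultimately show ?thesis using a Inr4_iff[of b d b' d' \<tau>] by simp
  qed
qed

lemma aff_Inr:
  assumes bj: "bij \<tau>" and t0: "\<tau> 0 = 0"
  shows "aff (SQS \<tau>) (Inr a) (Inr c)"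
  unfolding aff_def
proof (intro allI impI)
  fix s t s' t'
  assume h: "distinct [Inr a, Inr c, s, t, s', t'] \<and> {Inr a, Inr c, s, t} \<in> SQS \<tau> \<and> {Inr a, Inr c, s', t'} \<in> SQS \<tau>"
  have d1: "distinct [Inr a, Inr c, s, t]" and d2: "distinct [Inr a, Inr c, s', t']" using h by auto
  have m1: "{Inr a, Inr c, s, t} \<in> SQS \<tau>" and m2: "{Inr a, Inr c, s', t'} \<in> SQS \<tau>" using h by simp_all
  from compl_Inr[OF t0 d1 m1] compl_Inr[OF t0 d2 m2]
  show "{s, t, s', t'} \<in> SQS \<tau>"
  proof (elim disjE exE conjE)
    fix e e2 e' e2'
    assume a: "s = Inr e" "t = Inr e2" "e + e2 = a + c" "s' = Inr e'" "t' = Inr e2'" "e' + e2' = a + c"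
    have "e + e2 + e' + e2' = (e + e2) + (e' + e2')" by (simp add: add.assoc)
    also have "\<dots> = 0" using a by simp
    moreover have "distinct [e, e2, e', e2']" using h a by auto
    ultimately show ?thesis using a Inr4_iff[of e e2 e' e2' \<tau>] by simp
  next
    fix e e2 b' d'
    assume a: "s = Inr e" "t = Inr e2" "e + e2 = a + c" "s' = Inl b'" "t' = Inl d'" "\<tau> (b' + d') = a + c"
    have "e \<noteq> e2" using h a by auto
    then have "e + e2 \<noteq> 0" by (simp add: vsum_zero_iff)
    then have "{Inl b', Inl d', Inr e, Inr e2} \<in> SQS \<tau>" using mixed_iff[of b' d' e e2 \<tau>] a by simp
    moreover have "{s, t, s', t'} = {Inl b', Inl d', Inr e, Inr e2}" using a by auto
    ultimately show ?thesis by simp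
  next
    fix b d e' e2'
    assume a: "s = Inl b" "t = Inl d" "\<tau> (b + d) = a + c" "s' = Inr e'" "t' = Inr e2'" "e' + e2' = a + c"
    have "e' \<noteq> e2'" using h a by auto
    then have "e' + e2' \<noteq> 0" by (simp add: vsum_zero_iff)
    then show ?thesis using mixed_iff[of b d e' e2' \<tau>] a by simp
  next
    fix b d b' d'
    assume a: "s = Inl b" "t = Inl d" "\<tau> (b + d) = a + c" "s' = Inl b'" "t' = Inl d'" "\<tau> (b' + d') = a + c"
    have "b + d = b' + d'" using a bj by (metis bij_is_inj injD)
    have "b + d + b' + d' = (b + d) + (b' + d')" by (simp add: add.assoc)
    also have "\<dots> = 0" using \<open>b + d = b' + d'\<close> by simp
    moreover have "distinct [b, d, b', d']" using h a by auto
    ultimately show ?thesis using a Inl4_iff[of b d b' d' \<tau>] by simp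
  qed
qed

lemma aff_sym: "aff S p q \<Longrightarrow> aff S q p"
  unfolding aff_def
proof (intro allI impI)
  fix s t s' t'
  assume a: "\<forall>s t s' t'. distinct [p, q, s, t, s', t'] \<and> {p, q, s, t} \<in> S \<and> {p, q, s', t'} \<in> S \<longrightarrow> {s, t, s', t'} \<in> S"
    and h: "distinct [q, p, s, t, s', t'] \<and> {q, p, s, t} \<in> S \<and> {q, p, s', t'} \<in> S"
  have e1: "{p, q, s, t} = {q, p, s, t}" by (rule insert_commute)
  have e2: "{p, q, s', t'} = {q, p, s', t'}" by (rule insert_commute)
  have "{p, q, s, t} \<in> S" "{p, q, s', t'} \<in> S" using h unfolding e1 e2 by blast+
  moreover have "distinct [p, q, s, t, s', t']" using h by (simp only: distinct.simps set_simps insert_iff empty_iff) blast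
  ultimately show "{s, t, s', t'} \<in> S" using a by blast
qed

lemma aff_mixed:
  assumes bj: "bij \<tau>" and t0: "\<tau> 0 = 0" and af: "aff (SQS \<tau>) (Inl a) (Inr b)"
  shows "\<tau> (u + v) = \<tau> u + \<tau> v"
proof -
  have inj: "inj \<tau>" using bj by (simp add: bij_is_inj)
  consider "u = 0" | "v = 0" | "u = v" | "u \<noteq> 0" "v \<noteq> 0" "u \<noteq> v" by blast
  then show ?thesis
  proof cases
    case 1 then show ?thesis using t0 by simp
  next
    case 2 then show ?thesis using t0 by simp
  next
    case 3 then show ?thesis using t0 by simp
  next
    case 4
    have tu: "\<tau> u \<noteq> 0" using 4 t0 inj by (metis injD)
    have tv: "\<tau> v \<noteq> 0" using 4 t0 inj by (metis injD)
    have tuv: "\<tau> u \<noteq> \<tau> v" using 4 inj by (metis injD)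
    define c where "c = a + u"
    define c' where "c' = a + v"
    define d where "d = b + \<tau> u"
    define d' where "d' = b + \<tau> v"
    have ac: "a + c = u" "a + c' = v" "b + d = \<tau> u" "b + d' = \<tau> v"
      unfolding c_def c'_def d_def d'_def by simp_all
    have "{Inl a, Inl c, Inr b, Inr d} \<in> SQS \<tau>" using mixed_iff[of a c b d \<tau>] ac tu by simp
    moreover have "{Inl a, Inl c, Inr b, Inr d} = {Inl a, Inr b, Inl c, Inr d}" by auto
    ultimately have b1: "{Inl a, Inr b, Inl c, Inr d} \<in> SQS \<tau>" by simp
    have "{Inl a, Inl c', Inr b, Inr d'} \<in> SQS \<tau>" using mixed_iff[of a c' b d' \<tau>] ac tv by simp
    moreover have "{Inl a, Inl c', Inr b, Inr d'} = {Inl a, Inr b, Inl c', Inr d'}" by auto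
    ultimately have b2: "{Inl a, Inr b, Inl c', Inr d'} \<in> SQS \<tau>" by simp
    have "a \<noteq> c" "a \<noteq> c'" "c \<noteq> c'" "b \<noteq> d" "b \<noteq> d'" "d \<noteq> d'"
      unfolding c_def c'_def d_def d'_def using 4 tu tv tuv by simp_all
    then have "distinct [Inl a, Inr b, Inl c, Inr d, Inl c', Inr d']" by simp
    then have "{Inl c, Inr d, Inl c', Inr d'} \<in> SQS \<tau>" using af b1 b2 unfolding aff_def by blast
    moreover have "{Inl c, Inr d, Inl c', Inr d'} = {Inl c, Inl c', Inr d, Inr d'}" by auto
    ultimately have "{Inl c, Inl c', Inr d, Inr d'} \<in> SQS \<tau>" by simp
    then have "\<tau> (c + c') = d + d'" using mixed_iff[THEN iffD1] by blast
    moreover have "c + c' = u + v" "d + d' = \<tau> u + \<tau> v"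
      unfolding c_def c'_def d_def d'_def by (simp_all add: add_ac)
    ultimately show ?thesis by simp
  qed
qed


definition trans_map :: "bit ^ 'n \<Rightarrow> bit ^ 'n \<Rightarrow> 'n::finite pt \<Rightarrow> 'n pt" where
  "trans_map s t = map_sum (\<lambda>x. x + s) (\<lambda>y. y + t)"

lemma trans_simps[simp]: "trans_map s t (Inl x) = Inl (x + s)" "trans_map s t (Inr y) = Inr (y + t)"
  by (simp_all add: trans_map_def)

lemma sum4_shift: "((a::bit^'n) + s) + (b + s) + (c + s) + (d + s) = a + b + c + d"
  by (simp add: add_ac)

lemma sum2_shift: "((a::bit^'n) + s) + (c + s) = a + c"
  by (simp add: add_ac)

lemma trans_bij: "bij (trans_map s t)"
proof (rule o_bij)
  show "trans_map s t \<circ> trans_map s t = id"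
  proof
    fix p show "(trans_map s t \<circ> trans_map s t) p = id p" by (cases p) (simp_all add: add.assoc)
  qed
  then show "trans_map s t \<circ> trans_map s t = id" .
qed

lemma trans_auto: "automorphism (trans_map s t) (SQS \<tau>)"
proof (rule auto_from_sub[OF trans_bij])
  fix Q assume "Q \<in> SQS \<tau>"
  from SQS_cases[OF this] show "trans_map s t ` Q \<in> SQS \<tau>"
  proof (elim disjE exE conjE)
    fix a b c d assume q: "Q = {Inl a, Inl b, Inl c, Inl d}" "distinct [a, b, c, d]" "a + b + c + d = 0"
    have "trans_map s t ` Q = {Inl (a + s), Inl (b + s), Inl (c + s), Inl (d + s)}" using q(1) by simp
    moreover have "distinct [a + s, b + s, c + s, d + s]" using q(2) by simp
    moreover have "(a + s) + (b + s) + (c + s) + (d + s) = 0" using q(3) by (simp only: sum4_shift)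
    ultimately show ?thesis using Inl4_iff by metis
  next
    fix a b c d assume q: "Q = {Inr a, Inr b, Inr c, Inr d}" "distinct [a, b, c, d]" "a + b + c + d = 0"
    have "trans_map s t ` Q = {Inr (a + t), Inr (b + t), Inr (c + t), Inr (d + t)}" using q(1) by simp
    moreover have "distinct [a + t, b + t, c + t, d + t]" using q(2) by simp
    moreover have "(a + t) + (b + t) + (c + t) + (d + t) = 0" using q(3) by (simp only: sum4_shift)
    ultimately show ?thesis using Inr4_iff by metis
  next
    fix a c b d assume q: "Q = {Inl a, Inl c, Inr b, Inr d}" "\<tau> (a + c) = b + d" "b + d \<noteq> 0"
    have "trans_map s t ` Q = {Inl (a + s), Inl (c + s), Inr (b + t), Inr (d + t)}" using q(1) by simp
    moreover have "\<tau> ((a + s) + (c + s)) = (b + t) + (d + t)" "(b + t) + (d + t) \<noteq> 0"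
      using q(2,3) by (simp_all only: sum2_shift not_False_eq_True)
    ultimately show ?thesis using mixed_iff by metis
  qed
qed

definition swap_map :: "bit ^ 'n ^ 'n \<Rightarrow> bit ^ 'n ^ 'n \<Rightarrow> 'n::finite pt \<Rightarrow> 'n pt" where
  "swap_map P R = case_sum (\<lambda>x. Inr (P *v x)) (\<lambda>y. Inl (R *v y))"

lemma swap_simps[simp]: "swap_map P R (Inl x) = Inr (P *v x)" "swap_map P R (Inr y) = Inl (R *v y)"
  by (simp_all add: swap_map_def)

lemma mat_inj:
  fixes P P' :: "bit ^ 'n ^ 'n"
  assumes "P' ** P = mat 1"
  shows "P *v x = P *v y \<longleftrightarrow> x = y"
proof
  assume "P *v x = P *v y"
  then have "P' *v (P *v x) = P' *v (P *v y)" by simp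
  then show "x = y" using assms by (simp add: matrix_vector_mul_assoc)
qed simp

lemma mat_sum4: "(P::bit^'n^'n) *v a + P *v b + P *v c + P *v d = P *v (a + b + c + d)"
  by (simp add: matrix_vector_right_distrib)

lemma swap_auto:
  fixes A A' B B' :: "bit ^ 'n ^ 'n"
  assumes AA: "A ** A' = mat 1" "A' ** A = mat 1" and BB: "B ** B' = mat 1" "B' ** B = mat 1"
    and key: "\<And>y. \<tau> (A *v \<tau> y) = B' *v y" and t0: "\<tau> 0 = 0"
  shows "automorphism (swap_map B' A) (SQS \<tau>)"
proof (rule auto_from_sub)
  show "bij (swap_map B' A)"
  proof (rule o_bij[where g = "swap_map A' B"])
    show "swap_map A' B \<circ> swap_map B' A = id"
    proof
      fix p show "(swap_map A' B \<circ> swap_map B' A) p = id p"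
        using AA BB by (cases p) (simp_all add: matrix_vector_mul_assoc)
    qed
    show "swap_map B' A \<circ> swap_map A' B = id"
    proof
      fix p show "(swap_map B' A \<circ> swap_map A' B) p = id p"
        using AA BB by (cases p) (simp_all add: matrix_vector_mul_assoc)
    qed
  qed
next
  have iB: "B' *v x = B' *v y \<longleftrightarrow> x = y" for x y by (rule mat_inj[OF BB(1)])
  have iA: "A *v x = A *v y \<longleftrightarrow> x = y" for x y by (rule mat_inj[OF AA(2)])
  fix Q assume "Q \<in> SQS \<tau>"
  from SQS_cases[OF this] show "swap_map B' A ` Q \<in> SQS \<tau>"
  proof (elim disjE exE conjE)
    fix a b c d assume q: "Q = {Inl a, Inl b, Inl c, Inl d}" "distinct [a, b, c, d]" "a + b + c + d = 0"
    have "swap_map B' A ` Q = {Inr (B' *v a), Inr (B' *v b), Inr (B' *v c), Inr (B' *v d)}" using q(1) by simp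
    moreover have "distinct [B' *v a, B' *v b, B' *v c, B' *v d]" using q(2) iB by simp
    moreover have "B' *v a + B' *v b + B' *v c + B' *v d = 0" using q(3) by (simp only: mat_sum4) simp
    ultimately show ?thesis using Inr4_iff by metis
  next
    fix a b c d assume q: "Q = {Inr a, Inr b, Inr c, Inr d}" "distinct [a, b, c, d]" "a + b + c + d = 0"
    have "swap_map B' A ` Q = {Inl (A *v a), Inl (A *v b), Inl (A *v c), Inl (A *v d)}" using q(1) by simp
    moreover have "distinct [A *v a, A *v b, A *v c, A *v d]" using q(2) iA by simp
    moreover have "A *v a + A *v b + A *v c + A *v d = 0" using q(3) by (simp only: mat_sum4) simp
    ultimately show ?thesis using Inl4_iff by metis
  next
    fix a c b d assume q: "Q = {Inl a, Inl c, Inr b, Inr d}" "\<tau> (a + c) = b + d" "b + d \<noteq> 0"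
    have "swap_map B' A ` Q = {Inl (A *v b), Inl (A *v d), Inr (B' *v a), Inr (B' *v c)}" using q(1) by auto
    moreover have "\<tau> (A *v b + A *v d) = B' *v a + B' *v c"
    proof -
      have "\<tau> (A *v b + A *v d) = \<tau> (A *v \<tau> (a + c))" using q(2) by (simp add: matrix_vector_right_distrib)
      also have "\<dots> = B' *v (a + c)" by (rule key)
      finally show ?thesis by (simp add: matrix_vector_right_distrib)
    qed
    moreover have "B' *v a + B' *v c \<noteq> 0"
    proof
      assume "B' *v a + B' *v c = 0"
      then have "B' *v (a + c) = B' *v 0" by (simp add: matrix_vector_right_distrib)
      then have "a + c = 0" using iB by blast
      then show False using q t0 by simp
    qed
    ultimately show ?thesis using mixed_iff by metis
  qed
qed


theorem corollary1:
  fixes \<tau> :: "bit ^ 'n \<Rightarrow> bit ^ 'n"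
  assumes "bij \<tau>" and "\<tau> 0 = 0"
  shows "point_transitive (SQS \<tau>) \<longleftrightarrow>
         (\<exists>A B :: bit ^ 'n ^ 'n. invertible A \<and> invertible B \<and>
            (\<forall>x. inv \<tau> x = A *v \<tau> (B *v x)))"
proof -
  note bj = assms(1) and t0 = assms(2)
  have sf: "\<tau> (inv \<tau> x) = x" for x using bj by (simp add: bij_is_surj surj_f_inv_f)
  have fs: "inv \<tau> (\<tau> x) = x" for x using bj by (simp add: bij_is_inj)
  have tinj: "inj \<tau>" using bj by (simp add: bij_is_inj)
  have fin: "finite (UNIV :: (bit ^ 'n) set)" by simp
  show ?thesis
  proof
    assume pt: "point_transitive (SQS \<tau>)"
    show "\<exists>A B :: bit ^ 'n ^ 'n. invertible A \<and> invertible B \<and> (\<forall>x. inv \<tau> x = A *v \<tau> (B *v x))"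
    proof (cases "addh \<tau>")
      case True
      have ai: "addh (inv \<tau>)" unfolding addh_def
      proof (intro allI)
        fix x y
        have "\<tau> (inv \<tau> x + inv \<tau> y) = x + y" using True sf by (simp add: addh_def)
        then show "inv \<tau> (x + y) = inv \<tau> x + inv \<tau> y" by (metis fs)
      qed
      obtain M where M: "invertible M" "\<forall>x. inv \<tau> x = M *v x"
        using addh_bij_matrix[OF ai bij_imp_bij_inv[OF bj]] by blast
      have "inv \<tau> x = M *v \<tau> (M *v x)" for x
      proof -
        have e: "\<tau> (M *v x) = x" using M(2) sf by metis
        show ?thesis using e M(2) by simp
      qed
      then show ?thesis using M(1) by blast
    next
      case False
      then obtain u v where nl: "\<tau> (u + v) \<noteq> \<tau> u + \<tau> v" unfolding addh_def by blast
      obtain \<sigma> where au: "automorphism \<sigma> (SQS \<tau>)" and s0: "\<sigma> (Inl 0) = Inr 0"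
        using pt unfolding point_transitive_def by blast
      have bs: "bij \<sigma>" using au by (simp add: automorphism_def)
      have si: "inj \<sigma>" using bs by (simp add: bij_is_inj)
      have nmix: "\<not> aff (SQS \<tau>) (Inl a) (Inr b)" for a b using aff_mixed[OF bj t0] nl by blast
      have L: "\<exists>z. \<sigma> (Inl x) = Inr z" for x
      proof (cases "\<sigma> (Inl x)")
        case (Inl z)
        have "aff (SQS \<tau>) (Inl x) (Inl 0)" by (rule aff_Inl[of \<tau>, OF t0])
        then have "aff (SQS \<tau>) (\<sigma> (Inl x)) (\<sigma> (Inl 0))" using aff_iff[OF au] by blast
        then have "aff (SQS \<tau>) (Inl z) (Inr 0)" using Inl s0 by simp
        then show ?thesis using nmix by blast
      next
        case (Inr z) then show ?thesis by blast
      qed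
      have R: "\<exists>z. \<sigma> (Inr y) = Inl z" for y
      proof (cases "\<sigma> (Inr y)")
        case (Inr z)
        have "aff (SQS \<tau>) (Inr z) (Inr 0)" by (rule aff_Inr[OF bj t0])
        then have "aff (SQS \<tau>) (\<sigma> (Inr y)) (\<sigma> (Inl 0))" using Inr s0 by simp
        then have "aff (SQS \<tau>) (Inr y) (Inl 0)" using aff_iff[OF au] by blast
        then have "aff (SQS \<tau>) (Inl 0) (Inr y)" by (rule aff_sym)
        then show ?thesis using nmix by blast
      next
        case (Inl z) then show ?thesis by blast
      qed
      define f where "f x = projr (\<sigma> (Inl x))" for x
      define g where "g y = projl (\<sigma> (Inr y))" for y
      have fI: "\<sigma> (Inl x) = Inr (f x)" for x using L[of x] unfolding f_def by auto
      have gI: "\<sigma> (Inr y) = Inl (g y)" for y using R[of y] unfolding g_def by auto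
      have f0: "f 0 = 0" using s0 fI[of 0] by simp
      have finj: "inj f"
      proof (rule injI)
        fix x y assume "f x = f y"
        then have "\<sigma> (Inl x) = \<sigma> (Inl y)" using fI by simp
        then show "x = y" using si by (simp add: inj_eq)
      qed
      have ginj: "inj g"
      proof (rule injI)
        fix x y assume "g x = g y"
        then have "\<sigma> (Inr x) = \<sigma> (Inr y)" using gI by simp
        then show "x = y" using si by (simp add: inj_eq)
      qed
      have plane: "distinct [0, x, y, x + y] \<and> 0 + x + y + (x + y) = 0"
        if "x \<noteq> 0" "y \<noteq> 0" "x \<noteq> y" for x y :: "bit ^ 'n"
      proof -
        have "x + y \<noteq> 0" using that by (simp add: vsum_zero_iff)
        moreover have "x + y \<noteq> x" "x + y \<noteq> y" using that by simp_all
        ultimately have "distinct [0, x, y, x + y]" using that by auto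
        moreover have "0 + x + y + (x + y) = 0" by (simp add: add_ac)
        ultimately show ?thesis by blast
      qed
      have fadd: "addh f" unfolding addh_def
      proof (intro allI)
        fix x y :: "bit ^ 'n"
        consider "x = 0" | "y = 0" | "x = y" | "x \<noteq> 0" "y \<noteq> 0" "x \<noteq> y" by blast
        then show "f (x + y) = f x + f y"
        proof cases
          case 1 then show ?thesis using f0 by simp
        next
          case 2 then show ?thesis using f0 by simp
        next
          case 3 then show ?thesis using f0 by simp
        next
          case 4
          have "{Inl 0, Inl x, Inl y, Inl (x + y)} \<in> SQS \<tau>" using plane[OF 4] Inl4_iff by metis
          then have "\<sigma> ` {Inl 0, Inl x, Inl y, Inl (x + y)} \<in> SQS \<tau>" using auto_mem[OF au] by blast
          then have "{Inr (f 0), Inr (f x), Inr (f y), Inr (f (x + y))} \<in> SQS \<tau>" using fI by simp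
          then have "f 0 + f x + f y + f (x + y) = 0" using Inr4_iff[THEN iffD1] by blast
          then have "(f x + f y) + f (x + y) = 0" using f0 by (simp add: add.assoc)
          then show ?thesis by (metis vsum_zero_iff)
        qed
      qed
      define h where "h y = g y + g 0" for y
      have hadd: "addh h" unfolding addh_def
      proof (intro allI)
        fix x y :: "bit ^ 'n"
        consider "x = 0" | "y = 0" | "x = y" | "x \<noteq> 0" "y \<noteq> 0" "x \<noteq> y" by blast
        then show "h (x + y) = h x + h y"
        proof cases
          case 1 then show ?thesis unfolding h_def by (simp add: add_ac)
        next
          case 2 then show ?thesis unfolding h_def by (simp add: add_ac)
        next
          case 3 then show ?thesis unfolding h_def by (simp add: add_ac)
        next
          case 4
          have "{Inr 0, Inr x, Inr y, Inr (x + y)} \<in> SQS \<tau>" using plane[OF 4] Inr4_iff by metis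
          then have "\<sigma> ` {Inr 0, Inr x, Inr y, Inr (x + y)} \<in> SQS \<tau>" using auto_mem[OF au] by blast
          then have "{Inl (g 0), Inl (g x), Inl (g y), Inl (g (x + y))} \<in> SQS \<tau>" using gI by simp
          then have s: "g 0 + g x + g y + g (x + y) = 0" using Inl4_iff[THEN iffD1] by blast
          have "(g (x + y) + g 0) + (g x + g y) = g 0 + g x + g y + g (x + y)" by (simp add: add_ac)
          then have "(g (x + y) + g 0) + (g x + g y) = 0" using s by simp
          then have "g (x + y) + g 0 = g x + g y" by (simp add: vsum_zero_iff)
          then show ?thesis unfolding h_def by (simp add: add_ac)
        qed
      qed
      have hinj: "inj h"
      proof (rule injI)
        fix x y assume "h x = h y"
        then have "g x = g y" unfolding h_def by simp
        then show "x = y" using ginj by (simp add: inj_eq)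
      qed
      have key: "\<tau> (h (\<tau> w)) = f w" for w
      proof (cases "w = 0")
        case True then show ?thesis using t0 f0 unfolding h_def by simp
      next
        case False
        have tw: "\<tau> w \<noteq> 0" using False t0 tinj by (metis injD)
        have "{Inl w, Inl 0, Inr (\<tau> w), Inr 0} \<in> SQS \<tau>" using mixed_iff[of w 0 "\<tau> w" 0 \<tau>] tw by simp
        then have "\<sigma> ` {Inl w, Inl 0, Inr (\<tau> w), Inr 0} \<in> SQS \<tau>" using auto_mem[OF au] by blast
        then have "{Inr (f w), Inr (f 0), Inl (g (\<tau> w)), Inl (g 0)} \<in> SQS \<tau>" using fI gI by simp
        moreover have "{Inr (f w), Inr (f 0), Inl (g (\<tau> w)), Inl (g 0)} = {Inl (g (\<tau> w)), Inl (g 0), Inr (f w), Inr (f 0)}"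
          by auto
        ultimately have "{Inl (g (\<tau> w)), Inl (g 0), Inr (f w), Inr (f 0)} \<in> SQS \<tau>" by simp
        then have "\<tau> (g (\<tau> w) + g 0) = f w + f 0" using mixed_iff[THEN iffD1] by blast
        then show ?thesis unfolding h_def using f0 by simp
      qed
      have bf: "bij f" using finj fin finite_UNIV_inj_surj by (blast intro: bijI)
      have bh: "bij h" using hinj fin finite_UNIV_inj_surj by (blast intro: bijI)
      obtain Mf where Mf: "invertible Mf" "\<forall>x. f x = Mf *v x" using addh_bij_matrix[OF fadd bf] by blast
      obtain Mh where Mh: "invertible Mh" "\<forall>x. h x = Mh *v x" using addh_bij_matrix[OF hadd bh] by blast
      obtain Mf' where Mf': "Mf ** Mf' = mat 1" "Mf' ** Mf = mat 1" using Mf(1) unfolding invertible_def by blast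
      have "invertible Mf'" unfolding invertible_def using Mf' by blast
      moreover have "inv \<tau> x = Mh *v \<tau> (Mf' *v x)" for x
      proof -
        have "f (Mf' *v x) = x" using Mf(2) Mf'(1) by (simp add: matrix_vector_mul_assoc)
        then have "\<tau> (h (\<tau> (Mf' *v x))) = x" using key by simp
        then have "inv \<tau> x = h (\<tau> (Mf' *v x))" using fs by metis
        then show ?thesis using Mh(2) by simp
      qed
      ultimately show ?thesis using Mh(1) by blast
    qed
  next
    assume "\<exists>A B :: bit ^ 'n ^ 'n. invertible A \<and> invertible B \<and> (\<forall>x. inv \<tau> x = A *v \<tau> (B *v x))"
    then obtain A B :: "bit ^ 'n ^ 'n" where iA: "invertible A" and iB: "invertible B"
      and e: "\<forall>x. inv \<tau> x = A *v \<tau> (B *v x)" by blast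
    obtain A' where AA: "A ** A' = mat 1" "A' ** A = mat 1" using iA unfolding invertible_def by blast
    obtain B' where BB: "B ** B' = mat 1" "B' ** B = mat 1" using iB unfolding invertible_def by blast
    have key: "\<tau> (A *v \<tau> y) = B' *v y" for y
    proof -
      have "inv \<tau> (B' *v y) = A *v \<tau> (B *v (B' *v y))" using e by blast
      also have "B *v (B' *v y) = y" using BB by (simp add: matrix_vector_mul_assoc)
      finally have "inv \<tau> (B' *v y) = A *v \<tau> y" .
      then show ?thesis using sf by metis
    qed
    have au: "automorphism (swap_map B' A) (SQS \<tau>)" by (rule swap_auto[OF AA BB key t0])
    have to: "\<exists>\<sigma>. automorphism \<sigma> (SQS \<tau>) \<and> \<sigma> (Inl x) = Inr y" for x y
    proof -
      let ?\<sigma> = "trans_map 0 y \<circ> swap_map B' A \<circ> trans_map x 0"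
      have "automorphism ?\<sigma> (SQS \<tau>)" using auto_comp[OF auto_comp[OF trans_auto au] trans_auto] by blast
      moreover have "?\<sigma> (Inl x) = Inr y" by simp
      ultimately show ?thesis by blast
    qed
    show "point_transitive (SQS \<tau>)" unfolding point_transitive_def
    proof (intro allI)
      fix p q :: "'n pt"
      show "\<exists>\<sigma>. automorphism \<sigma> (SQS \<tau>) \<and> \<sigma> p = q"
      proof (cases p; cases q)
        fix x y assume "p = Inl x" "q = Inl y"
        moreover have "trans_map (x + y) 0 (Inl x) = Inl y" by simp
        ultimately show ?thesis using trans_auto by metis
      next
        fix x y assume "p = Inl x" "q = Inr y"
        then show ?thesis using to by blast
      next
        fix x y assume p: "p = Inr x" and q: "q = Inl y"
        obtain \<sigma> where s: "automorphism \<sigma> (SQS \<tau>)" "\<sigma> (Inl y) = Inr x" using to by blast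
        have "inj \<sigma>" using s(1) by (simp add: automorphism_def bij_is_inj)
        then have "inv \<sigma> (Inr x) = Inl y" using s(2) by (rule inv_f_eq)
        then show ?thesis using auto_inv[OF s(1)] p q by blast
      next
        fix x y assume "p = Inr x" "q = Inr y"
        moreover have "trans_map 0 (x + y) (Inr x) = Inr y" by simp
        ultimately show ?thesis using trans_auto by metis
      qed
    qed
  qed
qed

end
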